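(* Fix $\lambda_t\in\mathbb{R}^m_+$ and $h\in[0,1)$. For each deterministic policy $\pi$ define $\mathcal{T}^\pi_1:\mathbb{R}^{\mathcal{S}}\to\mathbb{R}^{\mathcal{S}}$ by $$[\mathcal{T}_1^\pi v](s) = [\mathcal{T}^\pi v](s) - \gamma h\langle P^o_{s,\pi(s)}, v - V^\pi_r + \lambda_t^\top V^\pi_g\rangle,$$ where $\mathcal{T}^\pi$ is the operator defined below. Then: (1) (Monotonicity) if $v_1\ge v_2$ componentwise then $\mathcal{T}_1^\pi v_1\ge\mathcal{T}_1^\pi v_2$; (2) (Transition invariance) for every $c\in\mathbb{R}$, $\mathcal{T}_1^\pi(v+c\mathbf{1}) = \mathcal{T}_1^\pi v + \gamma(1-h)c\mathbf{1}$; (3) (Contraction) $\mathcal{T}_1^\pi$ is a $\gamma(1-h)$-contraction in $\|\cdot\|_\infty$, and $V^\pi_r - \lambda_t^\top V^\pi_g$ is its unique fixed point.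
   Context: $\mathcal{S},\mathcal{A}$ finite, $\gamma\in[0,1)$. $P^o$ is a nominal kernel and $\mathcal{P}=\otimes_{(s,a)}\mathcal{P}_{s,a}$ an $(s,a)$-rectangular uncertainty set, $\mathcal{P}_{s,a}=\{P\in\Delta(\mathcal{S}):D(P,P^o_{s,a})\le\beta_{s,a}\}$ (minima over these sets taken to be attained). $r:\mathcal{S}\times\mathcal{A}\to[0,\bar R]$, $g=(g_1,\dots,g_m)$ with $g_i:\mathcal{S}\times\mathcal{A}\to[0,\tau_i]$. Policies $\pi:\mathcal{S}\to\mathcal{A}$ are deterministic and stationary. Robust values: $V^\pi_u(s)=\min_{\mathcal{K}\in\otimes_{t\ge0}\mathcal{P}}\mathbb{E}_{\mathcal{K}}[\sum_{t\ge0}\gamma^tu(s_t,a_t)\mid s_0=s,\pi]$ (worst case over sequences of kernels from $\mathcal{P}$), $V^\pi_g=(V^\pi_{g_i})_i$. The operator $\mathcal{T}^\pi$ is $[\mathcal{T}^{\pi} v](s) = (r - \lambda_t^{\top}g)(s, \pi(s)) + \gamma \langle P^o_{s, \pi(s)}, v \rangle + \gamma \min_{P_{s,\pi(s)} \in \mathcal{P}_{s,\pi(s)}} \langle P_{s, \pi(s)} - P^o_{s, \pi(s)}, V^{\pi}_{r} \rangle - \gamma \lambda_t^{\top} \min_{P_{s,\pi(s)} \in \mathcal{P}_{s,\pi(s)}} \langle P_{s, \pi(s)} - P^o_{s, \pi(s)}, V^{\pi}_{g} \rangle$, with the last minimum taken componentwise over the $g_i$ and with $V^\pi_r,V^\pi_g$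 fixed (independent of $v$). *)

theory Defs
  imports "HOL-Analysis.Analysis"
begin

text \<open>The constraint index set is {..<m}.\<close>

definition prob_simplex :: "('s::finite \<Rightarrow> real) set" where
  "prob_simplex = {p. (\<forall>s. 0 \<le> p s) \<and> (\<Sum>s\<in>UNIV. p s) = 1}"

definition ip :: "('s::finite \<Rightarrow> real) \<Rightarrow> ('s \<Rightarrow> real) \<Rightarrow> real" where
  "ip p v = (\<Sum>s\<in>UNIV. p s * v s)"

definition unc_set ::
  "(('s::finite \<Rightarrow> real) \<Rightarrow> ('s \<Rightarrow> real) \<Rightarrow> real) \<Rightarrow> ('s \<Rightarrow> 'a \<Rightarrow> real)
   \<Rightarrow> ('s \<Rightarrow> 'a \<Rightarrow> 's \<Rightarrow> real) \<Rightarrow> 's \<Rightarrow> 'a \<Rightarrow> ('s \<Rightarrow> real) set" where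
  "unc_set D \<beta> Po s a = {P \<in> prob_simplex. D P (Po s a) \<le> \<beta> s a}"

text \<open>State distribution at time t under a sequence of kernels K (K t is the kernel
  used at step t), deterministic stationary policy pi, starting in s0.\<close>
fun state_dist ::
  "(nat \<Rightarrow> 's::finite \<Rightarrow> 'a \<Rightarrow> 's \<Rightarrow> real) \<Rightarrow> ('s \<Rightarrow> 'a) \<Rightarrow> 's \<Rightarrow> nat \<Rightarrow> 's \<Rightarrow> real" where
  "state_dist K \<pi> s0 0 = (\<lambda>s. if s = s0 then 1 else 0)"
| "state_dist K \<pi> s0 (Suc t) =
     (\<lambda>s'. \<Sum>s\<in>UNIV. state_dist K \<pi> s0 t s * K t s (\<pi> s) s')"

definition disc_return ::
  "real \<Rightarrow> (nat \<Rightarrow> 's::finite \<Rightarrow> 'a \<Rightarrow> 's \<Rightarrow> real) \<Rightarrow> ('s \<Rightarrow> 'a) \<Rightarrow> ('s \<Rightarrow> 'a \<Rightarrow> real)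
   \<Rightarrow> 's \<Rightarrow> real" where
  "disc_return \<gamma> K \<pi> u s0 =
     (\<Sum>t. \<gamma> ^ t * (\<Sum>s\<in>UNIV. state_dist K \<pi> s0 t s * u s (\<pi> s)))"

definition robust_value ::
  "(('s::finite \<Rightarrow> real) \<Rightarrow> ('s \<Rightarrow> real) \<Rightarrow> real) \<Rightarrow> ('s \<Rightarrow> 'a \<Rightarrow> real)
   \<Rightarrow> ('s \<Rightarrow> 'a \<Rightarrow> 's \<Rightarrow> real) \<Rightarrow> real \<Rightarrow> ('s \<Rightarrow> 'a) \<Rightarrow> ('s \<Rightarrow> 'a \<Rightarrow> real) \<Rightarrow> 's \<Rightarrow> real" where
  "robust_value D \<beta> Po \<gamma> \<pi> u s0 =
     (INF K \<in> {K. \<forall>t s a. K t s a \<in> unc_set D \<beta> Po s a}. disc_return \<gamma> K \<pi> u s0)"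

definition min_dev ::
  "(('s::finite \<Rightarrow> real) \<Rightarrow> ('s \<Rightarrow> real) \<Rightarrow> real) \<Rightarrow> ('s \<Rightarrow> 'a \<Rightarrow> real)
   \<Rightarrow> ('s \<Rightarrow> 'a \<Rightarrow> 's \<Rightarrow> real) \<Rightarrow> 's \<Rightarrow> 'a \<Rightarrow> ('s \<Rightarrow> real) \<Rightarrow> real" where
  "min_dev D \<beta> Po s a V = (INF P \<in> unc_set D \<beta> Po s a. ip (\<lambda>s'. P s' - Po s a s') V)"

definition T_op ::
  "(('s::finite \<Rightarrow> real) \<Rightarrow> ('s \<Rightarrow> real) \<Rightarrow> real) \<Rightarrow> ('s \<Rightarrow> 'a \<Rightarrow> real)
   \<Rightarrow> ('s \<Rightarrow> 'a \<Rightarrow> 's \<Rightarrow> real) \<Rightarrow> real \<Rightarrow> ('s \<Rightarrow> 'a \<Rightarrow> real) \<Rightarrow> nat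
   \<Rightarrow> (nat \<Rightarrow> 's \<Rightarrow> 'a \<Rightarrow> real) \<Rightarrow> (nat \<Rightarrow> real) \<Rightarrow> ('s \<Rightarrow> 'a)
   \<Rightarrow> ('s \<Rightarrow> real) \<Rightarrow> 's \<Rightarrow> real" where
  "T_op D \<beta> Po \<gamma> r m g lam \<pi> v s =
     (r s (\<pi> s) - (\<Sum>i<m. lam i * g i s (\<pi> s)))
     + \<gamma> * ip (Po s (\<pi> s)) v
     + \<gamma> * min_dev D \<beta> Po s (\<pi> s) (robust_value D \<beta> Po \<gamma> \<pi> r)
     - \<gamma> * (\<Sum>i<m. lam i * min_dev D \<beta> Po s (\<pi> s) (robust_value D \<beta> Po \<gamma> \<pi> (g i)))"

definition T1_op ::
  "(('s::finite \<Rightarrow> real) \<Rightarrow> ('s \<Rightarrow> real) \<Rightarrow> real) \<Rightarrow> ('s \<Rightarrow> 'a \<Rightarrow> real)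
   \<Rightarrow> ('s \<Rightarrow> 'a \<Rightarrow> 's \<Rightarrow> real) \<Rightarrow> real \<Rightarrow> real \<Rightarrow> ('s \<Rightarrow> 'a \<Rightarrow> real) \<Rightarrow> nat
   \<Rightarrow> (nat \<Rightarrow> 's \<Rightarrow> 'a \<Rightarrow> real) \<Rightarrow> (nat \<Rightarrow> real) \<Rightarrow> ('s \<Rightarrow> 'a)
   \<Rightarrow> ('s \<Rightarrow> real) \<Rightarrow> 's \<Rightarrow> real" where
  "T1_op D \<beta> Po \<gamma> h r m g lam \<pi> v s =
     T_op D \<beta> Po \<gamma> r m g lam \<pi> v s
     - \<gamma> * h * ip (Po s (\<pi> s))
         (\<lambda>s'. v s' - robust_value D \<beta> Po \<gamma> \<pi> r s'
                + (\<Sum>i<m. lam i * robust_value D \<beta> Po \<gamma> \<pi> (g i) s'))"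

definition sup_norm :: "('s::finite \<Rightarrow> real) \<Rightarrow> real" where
  "sup_norm v = (MAX s. \<bar>v s\<bar>)"

end

theory Submission imports Defs begin

lemma ip_diff: "ip (\<lambda>s. p s - q s) v = ip p v - ip q v"
  by (simp add: ip_def left_diff_distrib sum_subtractf)

lemma ip_mono: "p \<in> prob_simplex \<Longrightarrow> (\<And>s. v s \<le> w s) \<Longrightarrow> ip p v \<le> ip p w"
  unfolding ip_def prob_simplex_def by (auto intro!: sum_mono mult_left_mono)

lemma ip_const: "p \<in> prob_simplex \<Longrightarrow> ip p (\<lambda>s. c) = c"
  unfolding ip_def prob_simplex_def by (simp add: sum_distrib_right[symmetric])

lemma ip_add_const: "p \<in> prob_simplex \<Longrightarrow> ip p (\<lambda>s. v s + c) = ip p v + c"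
  unfolding ip_def prob_simplex_def by (simp add: distrib_left sum.distrib sum_distrib_right[symmetric])

lemma ip_le_Max: "p \<in> prob_simplex \<Longrightarrow> ip p (v::'s::finite\<Rightarrow>real) \<le> Max (range v)"
proof -
  assume p: "p \<in> prob_simplex"
  have "ip p v \<le> ip p (\<lambda>s. Max (range v))" by (rule ip_mono[OF p]) simp
  then show ?thesis using ip_const[OF p] by simp
qed

lemma sup_norm_ge: "\<bar>v s\<bar> \<le> sup_norm (v::'s::finite\<Rightarrow>real)"
  unfolding sup_norm_def by (rule Max_ge) auto

lemma sup_norm_le: "(\<And>s. \<bar>v s\<bar> \<le> c) \<Longrightarrow> sup_norm (v::'s::finite\<Rightarrow>real) \<le> c"
  unfolding sup_norm_def by (subst Max_le_iff) auto

lemma ip_abs: "p \<in> prob_simplex \<Longrightarrow> \<bar>ip p v\<bar> \<le> sup_norm v"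
proof -
  assume p: "p \<in> prob_simplex"
  have "ip p v \<le> ip p (\<lambda>s. sup_norm v)" by (rule ip_mono[OF p]) (metis abs_le_D1 sup_norm_ge)
  moreover have "ip p (\<lambda>s. - sup_norm v) \<le> ip p v" by (rule ip_mono[OF p]) (metis abs_le_D2 sup_norm_ge minus_le_iff)
  ultimately show ?thesis using ip_const[OF p] by (simp add: abs_le_iff)
qed

lemma state_dist_simplex:
  assumes "\<And>t s a. K t s a \<in> prob_simplex"
  shows "state_dist K \<pi> s0 t \<in> prob_simplex"
proof (induction t)
  case 0 then show ?case by (simp add: prob_simplex_def)
next
  case (Suc t)
  have nn: "\<And>s s'. 0 \<le> K t s (\<pi> s) s'" and one: "\<And>s. (\<Sum>s'\<in>UNIV. K t s (\<pi> s) s') = 1"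
    using assms unfolding prob_simplex_def by auto
  have "(\<Sum>s'\<in>UNIV. \<Sum>s\<in>UNIV. state_dist K \<pi> s0 t s * K t s (\<pi> s) s')
        = (\<Sum>s\<in>UNIV. state_dist K \<pi> s0 t s * (\<Sum>s'\<in>UNIV. K t s (\<pi> s) s'))"
    by (subst sum.swap) (simp add: sum_distrib_left)
  also have "\<dots> = 1" using Suc one by (simp add: prob_simplex_def)
  finally show ?case using Suc nn by (auto simp: prob_simplex_def intro!: sum_nonneg)
qed

lemma state_dist_shift:
  "state_dist K \<pi> s0 (Suc t) = (\<lambda>s'. \<Sum>s1\<in>UNIV. K 0 s0 (\<pi> s0) s1 * state_dist (\<lambda>t. K (Suc t)) \<pi> s1 t s')"
proof (induction t)
  case 0
  show ?case by (rule ext) (simp add: if_distrib[where f="\<lambda>x. x * _"] if_distrib[where f="\<lambda>x. _ * x"] cong: if_cong)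
next
  case (Suc t)
  show ?case
    apply (rule ext)
    apply (subst state_dist.simps(2))
    apply (subst Suc)
    apply (simp add: sum_distrib_left sum_distrib_right mult.assoc)
    apply (subst sum.swap) apply simp
    done
qed

lemma term_bound:
  assumes "\<And>t s a. K t s a \<in> prob_simplex"
  shows "\<bar>\<Sum>s\<in>UNIV. state_dist K \<pi> s0 t s * u s (\<pi> s)\<bar> \<le> (\<Sum>s\<in>UNIV. \<bar>u s (\<pi> s)\<bar>)"
proof -
  have d: "state_dist K \<pi> s0 t \<in> prob_simplex" by (rule state_dist_simplex[OF assms])
  have "\<bar>\<Sum>s\<in>UNIV. state_dist K \<pi> s0 t s * u s (\<pi> s)\<bar> \<le> (\<Sum>s\<in>UNIV. \<bar>state_dist K \<pi> s0 t s * u s (\<pi> s)\<bar>)"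
    by (rule sum_abs)
  also have "\<dots> \<le> (\<Sum>s\<in>UNIV. \<bar>u s (\<pi> s)\<bar>)"
  proof (rule sum_mono)
    fix s
    have "0 \<le> state_dist K \<pi> s0 t s" "state_dist K \<pi> s0 t s \<le> 1"
      using d unfolding prob_simplex_def
      by (auto, metis UNIV_I finite member_le_sum)
    then show "\<bar>state_dist K \<pi> s0 t s * u s (\<pi> s)\<bar> \<le> \<bar>u s (\<pi> s)\<bar>"
      by (simp add: abs_mult mult_left_le_one_le)
  qed
  finally show ?thesis .
qed

lemma ret_summable:
  assumes "\<And>t s a. K t s a \<in> prob_simplex" "0 \<le> \<gamma>" "\<gamma> < 1"
  shows "summable (\<lambda>t. \<gamma> ^ t * (\<Sum>s\<in>UNIV. state_dist K \<pi> s0 t s * u s (\<pi> s)))"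
proof (rule summable_comparison_test[where g="\<lambda>t. \<gamma>^t * (\<Sum>s\<in>UNIV. \<bar>u s (\<pi> s)\<bar>)"])
  show "summable (\<lambda>t. \<gamma>^t * (\<Sum>s\<in>UNIV. \<bar>u s (\<pi> s)\<bar>))"
    using assms by (intro summable_mult2 summable_geometric) simp
  show "\<exists>N. \<forall>n\<ge>N. norm (\<gamma> ^ n * (\<Sum>s\<in>UNIV. state_dist K \<pi> s0 n s * u s (\<pi> s))) \<le> \<gamma>^n * (\<Sum>s\<in>UNIV. \<bar>u s (\<pi> s)\<bar>)"
    using term_bound[where K=K, OF assms(1)] assms(2) by (auto simp: abs_mult intro!: mult_left_mono)
qed

lemma ret_lower:
  assumes "\<And>t s a. K t s a \<in> prob_simplex" "0 \<le> \<gamma>" "\<gamma> < 1"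
  shows "(\<Sum>t. - (\<gamma>^t * (\<Sum>s\<in>UNIV. \<bar>u s (\<pi> s)\<bar>))) \<le> disc_return \<gamma> K \<pi> u s0"
  unfolding disc_return_def
proof (rule suminf_le)
  show "summable (\<lambda>t. - (\<gamma>^t * (\<Sum>s\<in>UNIV. \<bar>u s (\<pi> s)\<bar>)))"
    using assms by (intro summable_minus summable_mult2 summable_geometric) simp
  show "summable (\<lambda>t. \<gamma> ^ t * (\<Sum>s\<in>UNIV. state_dist K \<pi> s0 t s * u s (\<pi> s)))"
    by (rule ret_summable[OF assms])
  fix t
  show "- (\<gamma>^t * (\<Sum>s\<in>UNIV. \<bar>u s (\<pi> s)\<bar>)) \<le> \<gamma> ^ t * (\<Sum>s\<in>UNIV. state_dist K \<pi> s0 t s * u s (\<pi> s))"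
    using term_bound[where K=K, OF assms(1), of \<pi> s0 t u] assms(2)
    by (metis abs_le_D2 minus_le_iff minus_mult_right mult_left_mono zero_le_power)
qed

lemma ret_shift:
  assumes "\<And>t s a. K t s a \<in> prob_simplex" "0 \<le> \<gamma>" "\<gamma> < 1"
  shows "disc_return \<gamma> K \<pi> u s0 = u s0 (\<pi> s0)
     + \<gamma> * (\<Sum>s1\<in>UNIV. K 0 s0 (\<pi> s0) s1 * disc_return \<gamma> (\<lambda>t. K (Suc t)) \<pi> u s1)"
proof -
  let ?f = "\<lambda>t. \<gamma> ^ t * (\<Sum>s\<in>UNIV. state_dist K \<pi> s0 t s * u s (\<pi> s))"
  let ?g = "\<lambda>s1 t. \<gamma> ^ t * (\<Sum>s\<in>UNIV. state_dist (\<lambda>t. K (Suc t)) \<pi> s1 t s * u s (\<pi> s))"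
  have K': "\<And>t s a. (\<lambda>t. K (Suc t)) t s a \<in> prob_simplex" using assms(1) by simp
  have sf: "summable ?f" by (rule ret_summable[OF assms])
  have sg: "\<And>s1. summable (?g s1)" by (rule ret_summable[OF K' assms(2,3)])
  have f0: "?f 0 = u s0 (\<pi> s0)" by (simp add: if_distrib[where f="\<lambda>x. x * _"] cong: if_cong)
  have fS: "?f (Suc t) = \<gamma> * (\<Sum>s1\<in>UNIV. K 0 s0 (\<pi> s0) s1 * ?g s1 t)" for t
    apply (subst state_dist_shift)
    apply (simp add: sum_distrib_left sum_distrib_right mult.assoc)
    apply (subst sum.swap)
    apply (simp add: mult_ac)
    done
  have "suminf ?f = ?f 0 + (\<Sum>t. ?f (Suc t))" using suminf_split_head[OF sf] by simp
  also have "(\<Sum>t. ?f (Suc t)) = \<gamma> * (\<Sum>s1\<in>UNIV. K 0 s0 (\<pi> s0) s1 * suminf (?g s1))"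
    unfolding fS
    apply (subst suminf_mult)
     apply (intro summable_sum summable_mult sg)
    apply (subst suminf_sum)
     apply (intro summable_mult sg)
    apply (simp add: suminf_mult[OF sg])
    done
  finally show ?thesis unfolding disc_return_def f0 .
qed

lemma ip_diff_right: "ip p (\<lambda>s. v s - w s) = ip p v - ip p w"
  by (simp add: ip_def right_diff_distrib sum_subtractf)


lemma bellman:
  fixes D :: "('s::finite \<Rightarrow> real) \<Rightarrow> ('s \<Rightarrow> real) \<Rightarrow> real"
    and \<beta> :: "'s \<Rightarrow> 'a::finite \<Rightarrow> real"
    and Po :: "'s \<Rightarrow> 'a \<Rightarrow> 's \<Rightarrow> real"
    and u :: "'s \<Rightarrow> 'a \<Rightarrow> real" and \<pi> :: "'s \<Rightarrow> 'a"
  assumes gamma: "0 \<le> \<gamma>" "\<gamma> < 1"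
    and min_attained: "\<And>s a (V :: 's \<Rightarrow> real).
          \<exists>P\<in>unc_set D \<beta> Po s a. \<forall>Q\<in>unc_set D \<beta> Po s a.
             ip (\<lambda>s'. P s' - Po s a s') V \<le> ip (\<lambda>s'. Q s' - Po s a s') V"
  shows "robust_value D \<beta> Po \<gamma> \<pi> u s = u s (\<pi> s)
     + \<gamma> * ip (Po s (\<pi> s)) (robust_value D \<beta> Po \<gamma> \<pi> u)
     + \<gamma> * min_dev D \<beta> Po s (\<pi> s) (robust_value D \<beta> Po \<gamma> \<pi> u)"
proof -
  define F where "F = {K :: nat \<Rightarrow> 's \<Rightarrow> 'a \<Rightarrow> 's \<Rightarrow> real. \<forall>t s a. K t s a \<in> unc_set D \<beta> Po s a}"
  define V where "V = robust_value D \<beta> Po \<gamma> \<pi> u"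
  define R where "R = (\<lambda>K. disc_return \<gamma> K \<pi> u)"
  have Vdef: "V s = (INF K\<in>F. R K s)" for s unfolding V_def F_def R_def robust_value_def by simp
  have Fsimp: "K t s a \<in> prob_simplex" if "K \<in> F" for K t s a
    using that unfolding F_def unc_set_def by auto
  define Pm where "Pm = (\<lambda>s a. SOME P. P \<in> unc_set D \<beta> Po s a \<and> (\<forall>Q\<in>unc_set D \<beta> Po s a.
             ip (\<lambda>s'. P s' - Po s a s') V \<le> ip (\<lambda>s'. Q s' - Po s a s') V))"
  have Pm: "Pm s a \<in> unc_set D \<beta> Po s a \<and> (\<forall>Q\<in>unc_set D \<beta> Po s a.
             ip (\<lambda>s'. Pm s a s' - Po s a s') V \<le> ip (\<lambda>s'. Q s' - Po s a s') V)" for s a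
  proof -
    define Q where "Q = (\<lambda>P. P \<in> unc_set D \<beta> Po s a \<and> (\<forall>Q\<in>unc_set D \<beta> Po s a.
             ip (\<lambda>s'. P s' - Po s a s') V \<le> ip (\<lambda>s'. Q s' - Po s a s') V))"
    have "\<exists>P. Q P" unfolding Q_def using min_attained[of s a V] by blast
    then have "Q (SOME P. Q P)" by (rule someI_ex)
    then show ?thesis unfolding Pm_def Q_def by simp
  qed
  define Ks where "Ks = (\<lambda>t::nat. Pm)"
  have KsF: "Ks \<in> F" unfolding F_def Ks_def using Pm by blast
  have Fne: "F \<noteq> {}" using KsF by blast
  have bdd: "bdd_below ((\<lambda>K. R K s) ` F)" for s
    unfolding R_def by (rule bdd_belowI2, rule ret_lower[OF _ gamma]) (rule Fsimp)
  have Vle: "V s \<le> R K s" if "K \<in> F" for K s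
    unfolding Vdef by (rule cINF_lower[OF bdd that])
  have shiftF: "(\<lambda>t. K (Suc t)) \<in> F" if "K \<in> F" for K using that unfolding F_def by auto
  have Rshift: "R K s = u s (\<pi> s) + \<gamma> * ip (K 0 s (\<pi> s)) (R (\<lambda>t. K (Suc t)))" if "K \<in> F" for K s
    unfolding R_def ip_def by (rule ret_shift[OF _ gamma]) (rule Fsimp[OF that])
  have Pmin: "ip (Pm s (\<pi> s)) V \<le> ip P V" if "P \<in> unc_set D \<beta> Po s (\<pi> s)" for s P
    using Pm[of s "\<pi> s"] that by (auto simp: ip_diff)
  have Pms: "Pm s a \<in> prob_simplex" for s a using Pm[of s a] unfolding unc_set_def by auto
  have super0: "u s (\<pi> s) + \<gamma> * ip (Pm s (\<pi> s)) V \<le> (INF K\<in>F. R K s)" for s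
  proof (rule cINF_greatest[OF Fne])
    fix K assume K: "K \<in> F"
    have "ip (Pm s (\<pi> s)) V \<le> ip (K 0 s (\<pi> s)) V"
      using K unfolding F_def by (intro Pmin) auto
    also have "\<dots> \<le> ip (K 0 s (\<pi> s)) (R (\<lambda>t. K (Suc t)))"
      by (rule ip_mono[OF Fsimp[OF K]]) (rule Vle[OF shiftF[OF K]])
    finally have "ip (Pm s (\<pi> s)) V \<le> ip (K 0 s (\<pi> s)) (R (\<lambda>t. K (Suc t)))" .
    then show "u s (\<pi> s) + \<gamma> * ip (Pm s (\<pi> s)) V \<le> (\<lambda>K. R K s) K"
      using Rshift[OF K, of s] gamma by (simp add: mult_left_mono)
  qed
  have super: "u s (\<pi> s) + \<gamma> * ip (Pm s (\<pi> s)) V \<le> V s" for s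
    using super0[of s] Vdef[of s] by simp
  have RKs: "R Ks s = u s (\<pi> s) + \<gamma> * ip (Pm s (\<pi> s)) (R Ks)" for s
    using Rshift[OF KsF, of s] unfolding Ks_def by simp
  define e where "e = (\<lambda>s. R Ks s - V s)"
  define M where "M = Max (range e)"
  have eM: "e s \<le> \<gamma> * M" for s
  proof -
    have "e s \<le> \<gamma> * ip (Pm s (\<pi> s)) e"
      using super[of s] RKs[of s] unfolding e_def ip_diff_right by (simp add: right_diff_distrib)
    also have "\<dots> \<le> \<gamma> * M" unfolding M_def using gamma ip_le_Max[OF Pms] by (simp add: mult_left_mono)
    finally show ?thesis .
  qed
  have "M \<in> range e" unfolding M_def by (rule Max_in) auto
  then obtain s0 where "M = e s0" by auto
  then have "M \<le> \<gamma> * M" using eM[of s0] by simp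
  then have "(1 - \<gamma>) * M \<le> 0" by (simp add: algebra_simps)
  then have "M \<le> 0" using gamma by (simp add: mult_le_0_iff)
  moreover have "e s \<le> M" for s unfolding M_def by (rule Max_ge) auto
  ultimately have "e s \<le> 0" for s by (meson order_trans)
  then have RV: "R Ks = V" using Vle[OF KsF] unfolding e_def by (intro ext antisym) (auto simp: algebra_simps)
  have md: "min_dev D \<beta> Po s a V = ip (\<lambda>s'. Pm s a s' - Po s a s') V" for s a
    unfolding min_dev_def by (rule cInf_eq_minimum) (use Pm[of s a] in auto)
  show ?thesis
    unfolding V_def[symmetric] md ip_diff using RKs[of s] unfolding RV by (simp add: algebra_simps)
qed


theorem proposition6:
  fixes D :: "('s::finite \<Rightarrow> real) \<Rightarrow> ('s \<Rightarrow> real) \<Rightarrow> real"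
    and \<beta> :: "'s \<Rightarrow> 'a::finite \<Rightarrow> real"
    and Po :: "'s \<Rightarrow> 'a \<Rightarrow> 's \<Rightarrow> real"
    and \<gamma> h Rbar :: real
    and r :: "'s \<Rightarrow> 'a \<Rightarrow> real"
    and m :: nat
    and g :: "nat \<Rightarrow> 's \<Rightarrow> 'a \<Rightarrow> real"
    and \<tau> :: "nat \<Rightarrow> real"
    and lam :: "nat \<Rightarrow> real"
    and \<pi> :: "'s \<Rightarrow> 'a"
  assumes gamma: "0 \<le> \<gamma>" "\<gamma> < 1"
    and h: "0 \<le> h" "h < 1"
    and nominal: "\<And>s a. Po s a \<in> prob_simplex"
    and min_attained: "\<And>s a (V :: 's \<Rightarrow> real).
          \<exists>P\<in>unc_set D \<beta> Po s a. \<forall>Q\<in>unc_set D \<beta> Po s a.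
             ip (\<lambda>s'. P s' - Po s a s') V \<le> ip (\<lambda>s'. Q s' - Po s a s') V"
    and r_bnd: "\<And>s a. 0 \<le> r s a \<and> r s a \<le> Rbar"
    and g_bnd: "\<And>i s a. i < m \<Longrightarrow> 0 \<le> g i s a \<and> g i s a \<le> \<tau> i"
    and lam: "\<And>i. i < m \<Longrightarrow> 0 \<le> lam i"
  defines "T1 \<equiv> T1_op D \<beta> Po \<gamma> h r m g lam \<pi>"
    and "Vstar \<equiv> (\<lambda>s. robust_value D \<beta> Po \<gamma> \<pi> r s
                     - (\<Sum>i<m. lam i * robust_value D \<beta> Po \<gamma> \<pi> (g i) s))"
  shows "(\<forall>v1 v2. (\<forall>s. v2 s \<le> v1 s) \<longrightarrow> (\<forall>s. T1 v2 s \<le> T1 v1 s))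
       \<and> (\<forall>v c. T1 (\<lambda>s. v s + c) = (\<lambda>s. T1 v s + \<gamma> * (1 - h) * c))
       \<and> (\<forall>v w. sup_norm (\<lambda>s. T1 v s - T1 w s) \<le> \<gamma> * (1 - h) * sup_norm (\<lambda>s. v s - w s))
       \<and> T1 Vstar = Vstar
       \<and> (\<forall>v. T1 v = v \<longrightarrow> v = Vstar)"
  proof -
  let ?p = "\<lambda>s. Po s (\<pi> s)"
  define Vr where "Vr = robust_value D \<beta> Po \<gamma> \<pi> r"
  define Vg where "Vg = (\<lambda>i. robust_value D \<beta> Po \<gamma> \<pi> (g i))"
  have vg: "robust_value D \<beta> Po \<gamma> \<pi> (g i) = Vg i" for i unfolding Vg_def ..
  have ps: "?p s \<in> prob_simplex" for s by (rule nominal)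
  have c0: "0 \<le> \<gamma> * (1 - h)" using gamma h by simp
  have "\<gamma> * (1 - h) \<le> \<gamma> * 1" using gamma h by (intro mult_left_mono) auto
  then have c1: "\<gamma> * (1 - h) < 1" using gamma by simp
  have lin3: "ip p (\<lambda>s'. v s' - a s' + b s') = ip p v - ip p a + ip p b" for p v a b :: "'s \<Rightarrow> real"
    by (simp add: ip_def algebra_simps sum.distrib sum_subtractf)
  have ip0: "ip p (\<lambda>s. 0) = 0" for p :: "'s \<Rightarrow> real" by (simp add: ip_def)
  have rep: "T1 v s = T1 (\<lambda>_. 0) s + \<gamma> * (1 - h) * ip (?p s) v" for v s
    unfolding T1_def T1_op_def T_op_def Vr_def[symmetric] vg lin3 ip0
    by (simp add: algebra_simps)
  have P1: "\<forall>v1 v2. (\<forall>s. v2 s \<le> v1 s) \<longrightarrow> (\<forall>s. T1 v2 s \<le> T1 v1 s)"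
  proof (intro allI impI)
    fix v1 v2 :: "'s \<Rightarrow> real" and s assume "\<forall>s. v2 s \<le> v1 s"
    then have "ip (?p s) v2 \<le> ip (?p s) v1" by (intro ip_mono[OF ps]) auto
    then show "T1 v2 s \<le> T1 v1 s" using rep[of v1 s] rep[of v2 s] c0 by (simp add: mult_left_mono)
  qed
  have P2: "\<forall>v c. T1 (\<lambda>s. v s + c) = (\<lambda>s. T1 v s + \<gamma> * (1 - h) * c)"
  proof (intro allI ext)
    fix v :: "'s \<Rightarrow> real" and c s
    show "T1 (\<lambda>s. v s + c) s = T1 v s + \<gamma> * (1 - h) * c"
      using rep[of "\<lambda>s. v s + c" s] rep[of v s] ip_add_const[OF ps, of s v c] by (simp add: algebra_simps)
  qed
  have P3: "\<forall>v w. sup_norm (\<lambda>s. T1 v s - T1 w s) \<le> \<gamma> * (1 - h) * sup_norm (\<lambda>s. v s - w s)"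
  proof (intro allI sup_norm_le)
    fix v w :: "'s \<Rightarrow> real" and s
    have "T1 v s - T1 w s = \<gamma> * (1 - h) * ip (?p s) (\<lambda>s. v s - w s)"
      using rep[of v s] rep[of w s] by (simp add: ip_diff_right algebra_simps)
    then have "\<bar>T1 v s - T1 w s\<bar> = \<gamma> * (1 - h) * \<bar>ip (?p s) (\<lambda>s. v s - w s)\<bar>"
      by (metis abs_mult abs_of_nonneg c0)
    also have "\<dots> \<le> \<gamma> * (1 - h) * sup_norm (\<lambda>s. v s - w s)"
      by (rule mult_left_mono[OF ip_abs[OF ps] c0])
    finally show "\<bar>T1 v s - T1 w s\<bar> \<le> \<gamma> * (1 - h) * sup_norm (\<lambda>s. v s - w s)" .
  qed
  have Vs: "Vstar = (\<lambda>s. Vr s - (\<Sum>i<m. lam i * Vg i s))" unfolding Vstar_def Vr_def Vg_def ..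
  have ipV: "ip p Vstar = ip p Vr - (\<Sum>i<m. lam i * ip p (Vg i))" for p
  proof -
    have "ip p Vstar = ip p Vr - (\<Sum>s\<in>UNIV. \<Sum>i<m. p s * (lam i * Vg i s))"
      unfolding Vs ip_def by (simp add: right_diff_distrib sum_subtractf sum_distrib_left)
    also have "(\<Sum>s\<in>UNIV. \<Sum>i<m. p s * (lam i * Vg i s)) = (\<Sum>i<m. \<Sum>s\<in>UNIV. p s * (lam i * Vg i s))"
      by (rule sum.swap)
    also have "\<dots> = (\<Sum>i<m. lam i * ip p (Vg i))"
      unfolding ip_def by (simp add: sum_distrib_left mult_ac)
    finally show ?thesis .
  qed
  have P4: "T1 Vstar = Vstar"
  proof (rule ext)
    fix s
    let ?md = "\<lambda>V. min_dev D \<beta> Po s (\<pi> s) V"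
    have br: "Vr s = r s (\<pi> s) + \<gamma> * ip (?p s) Vr + \<gamma> * ?md Vr"
      unfolding Vr_def by (rule bellman[OF gamma min_attained])
    have bg: "Vg i s = g i s (\<pi> s) + \<gamma> * ip (?p s) (Vg i) + \<gamma> * ?md (Vg i)" for i
      unfolding Vg_def by (rule bellman[OF gamma min_attained])
    have hz: "(\<lambda>s'. Vstar s' - Vr s' + (\<Sum>i<m. lam i * Vg i s')) = (\<lambda>_. 0)"
      unfolding Vs by simp
    have sg: "(\<Sum>i<m. lam i * Vg i s) = (\<Sum>i<m. lam i * g i s (\<pi> s)) + \<gamma> * (\<Sum>i<m. lam i * ip (?p s) (Vg i))
         + \<gamma> * (\<Sum>i<m. lam i * ?md (Vg i))"
      unfolding bg by (simp add: algebra_simps sum.distrib sum_distrib_left)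
    have "T1 Vstar s = r s (\<pi> s) - (\<Sum>i<m. lam i * g i s (\<pi> s)) + \<gamma> * ip (?p s) Vstar
        + \<gamma> * ?md Vr - \<gamma> * (\<Sum>i<m. lam i * ?md (Vg i))"
      unfolding T1_def T1_op_def T_op_def Vr_def[symmetric] vg hz ip0 by simp
    also have "\<dots> = Vstar s"
      unfolding ipV using br sg unfolding Vs by (simp add: algebra_simps)
    finally show "T1 Vstar s = Vstar s" .
  qed
  have P5: "\<forall>v. T1 v = v \<longrightarrow> v = Vstar"
  proof (intro allI impI)
    fix v assume fv: "T1 v = v"
    let ?n = "sup_norm (\<lambda>s. v s - Vstar s)"
    have "?n \<le> \<gamma> * (1 - h) * ?n" using P3 fv P4 by metis
    moreover have "0 \<le> ?n" using sup_norm_ge[of "\<lambda>s. v s - Vstar s"] by (meson abs_ge_zero order_trans)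
    ultimately have "?n \<le> 0" using c1
      by (metis mult_le_cancel_right1 less_eq_real_def not_le mult.commute)
    then show "v = Vstar" using sup_norm_ge[of "\<lambda>s. v s - Vstar s"] by (intro ext) (meson abs_le_zero_iff order_trans eq_iff_diff_eq_0)
  qed
  show ?thesis using P1 P2 P3 P4 P5 by blast
qed

end
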